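(* Let $f$ be a diffeomorphism of $M=\mathbb{R}^d/\mathbb{Z}^d$ with an ergodic invariant Borel probability measure $\mu$, and let $A_1\subseteq A_2\subseteq\cdots$ be open sets with $A=\bigcup_mA_m$ $f$-invariant, $\mu(A)=1$, and $\mu(A_m)<1$ for all $m$. For $\varepsilon>0$ let $P_\varepsilon$ be the set of $x\in M$ for which there are infinitely many indices $m_1<m_2<\cdots$ and integers $j_i\ge\varepsilon/(1-\mu(A_{m_i}))$ such that $f^l(x)\in A_{m_i}$ for all $l$ with $-j_i\le l\le j_i$. Then $\mu(P_\varepsilon)\ge1-4\varepsilon$. *)

theory Defs
  imports "HOL-Probability.Probability"
begin

definition torus_rel :: "real^'n::finite \<Rightarrow> real^'n::finite \<Rightarrow> bool" where
  "torus_rel x y \<longleftrightarrow> (\<forall>i. x $ i - y $ i \<in> \<int>)"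

typedef ('n::finite) torus = "UNIV // {(x::real^'n, y). torus_rel x y}"
  by (auto simp: quotient_def)

definition tor_proj :: "real^'n::finite \<Rightarrow> 'n::finite torus" where
  "tor_proj x = Abs_torus ({(x::real^'n::finite, y). torus_rel x y} `` {x})"

definition torus_open :: "'n::finite torus set \<Rightarrow> bool" where
  "torus_open U \<longleftrightarrow> open (tor_proj -` U)"

definition torus_borel :: "'n::finite torus measure" where
  "torus_borel = sigma UNIV {U. torus_open U}"

definition C1_map :: "(real^'n::finite \<Rightarrow> real^'n::finite) \<Rightarrow> bool" where
  "C1_map F \<longleftrightarrow> (\<exists>F'. (\<forall>x. (F has_derivative F' x) (at x)) \<and>
                       (\<forall>v. continuous_on UNIV (\<lambda>x. F' x v)))"

definition torus_diffeo :: "('n::finite torus \<Rightarrow> 'n::finite torus) \<Rightarrow> bool" where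
  "torus_diffeo f \<longleftrightarrow> bij f \<and>
     (\<exists>F. C1_map F \<and> (\<forall>x. tor_proj (F x) = f (tor_proj x))) \<and>
     (\<exists>G. C1_map G \<and> (\<forall>x. tor_proj (G x) = inv f (tor_proj x)))"

definition int_iter :: "('a \<Rightarrow> 'a) \<Rightarrow> int \<Rightarrow> 'a \<Rightarrow> 'a" where
  "int_iter f l = (if 0 \<le> l then f ^^ nat l else inv f ^^ nat (- l))"

definition invariant_measure :: "('a \<Rightarrow> 'a) \<Rightarrow> 'a measure \<Rightarrow> bool" where
  "invariant_measure f \<mu> \<longleftrightarrow> f \<in> measurable \<mu> \<mu> \<and>
     (\<forall>B \<in> sets \<mu>. emeasure \<mu> (f -` B \<inter> space \<mu>) = emeasure \<mu> B)"

definition ergodic_measure :: "('a \<Rightarrow> 'a) \<Rightarrow> 'a measure \<Rightarrow> bool" where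
  "ergodic_measure f \<mu> \<longleftrightarrow> invariant_measure f \<mu> \<and>
     (\<forall>B \<in> sets \<mu>. f -` B \<inter> space \<mu> = B \<longrightarrow> measure \<mu> B = 0 \<or> measure \<mu> B = 1)"

definition P_set :: "('n::finite torus \<Rightarrow> 'n::finite torus) \<Rightarrow> 'n::finite torus measure \<Rightarrow> (nat \<Rightarrow> 'n::finite torus set)
                     \<Rightarrow> real \<Rightarrow> 'n::finite torus set" where
  "P_set f \<mu> A \<epsilon> = {x. \<exists>ms :: nat \<Rightarrow> nat. \<exists>js :: nat \<Rightarrow> int. strict_mono ms \<and>
      (\<forall>i. real_of_int (js i) \<ge> \<epsilon> / (1 - measure \<mu> (A (ms i))) \<and>
           (\<forall>l::int. - js i \<le> l \<and> l \<le> js i \<longrightarrow> int_iter f l x \<in> A (ms i)))}"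

end

theory Submission
  imports Defs "HOL-Library.Infinite_Set"
begin

lemma iter_pres:
  assumes g: "g \<in> measurable M M" and sp: "space M = UNIV"
    and pres: "\<And>B. B \<in> sets M \<Longrightarrow> measure M (g -` B) = measure M B"
  shows "(g^^k) \<in> measurable M M \<and> (\<forall>B\<in>sets M. measure M ((g^^k) -` B) = measure M B)"
proof (induction k)
  case 0
  then show ?case by (simp add: measurable_ident_sets)
next
  case (Suc k)
  have m: "g \<circ> (g^^k) \<in> measurable M M"
    using Suc g by (intro measurable_comp[of _ M M]) auto
  have "\<forall>B\<in>sets M. measure M ((g^^Suc k) -` B) = measure M B"
  proof
    fix B assume B: "B \<in> sets M"
    have gB: "g -` B \<in> sets M" using measurable_sets[OF g B] sp by simp
    have "(g^^Suc k) -` B = (g^^k) -` (g -` B)" by auto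
    then show "measure M ((g^^Suc k) -` B) = measure M B"
      using Suc gB pres[OF B] by simp
  qed
  then show ?case using m by (metis funpow.simps(2))
qed

theorem lemma4p4:
  fixes f :: "'n::finite torus \<Rightarrow> 'n::finite torus"
    and \<mu> :: "'n::finite torus measure"
    and A :: "nat \<Rightarrow> 'n::finite torus set"
    and \<epsilon> :: real
  assumes diffeo: "torus_diffeo f"
    and borel: "sets \<mu> = sets torus_borel"
    and prob: "prob_space \<mu>"
    and erg: "ergodic_measure f \<mu>"
    and opn: "\<And>m. torus_open (A m)"
    and incr: "\<And>m. A m \<subseteq> A (Suc m)"
    and inv: "f -` (\<Union>m. A m) = (\<Union>m. A m)"
    and full: "measure \<mu> (\<Union>m. A m) = 1"
    and small: "\<And>m. measure \<mu> (A m) < 1"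
    and eps: "\<epsilon> > 0"
  shows "P_set f \<mu> A \<epsilon> \<in> sets \<mu> \<and> measure \<mu> (P_set f \<mu> A \<epsilon>) \<ge> 1 - 4 * \<epsilon>"
proof -
  interpret P: prob_space \<mu> by (rule prob)
  have spT: "space (torus_borel :: 'n torus measure) = UNIV"
    unfolding torus_borel_def by (simp add: space_measure_of_conv)
  have sp: "space \<mu> = UNIV" using sets_eq_imp_space_eq[OF borel] spT by simp
  have opn_sets: "U \<in> sets \<mu>" if "torus_open U" for U
    using that unfolding borel torus_borel_def by (intro in_measure_of) auto
  have Am: "A m \<in> sets \<mu>" for m using opn_sets[OF opn] .
  have fmeas: "f \<in> measurable \<mu> \<mu>" using erg unfolding ergodic_measure_def invariant_measure_def by simp
  have fpres: "measure \<mu> (f -` B) = measure \<mu> B" if "B \<in> sets \<mu>" for B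
    using erg that sp unfolding ergodic_measure_def invariant_measure_def measure_def by simp
  have bij: "bij f" using diffeo unfolding torus_diffeo_def by simp
  obtain G where G: "C1_map G" "\<And>x. tor_proj (G x) = inv f (tor_proj x)"
    using diffeo unfolding torus_diffeo_def by blast
  have Gc: "continuous_on UNIV G"
    using G(1) unfolding C1_map_def
    by (metis continuous_at_imp_continuous_on has_derivative_continuous)
  have ginvmeas: "inv f \<in> measurable \<mu> \<mu>"
  proof -
    have "inv f \<in> measurable \<mu> torus_borel"
      unfolding torus_borel_def
    proof (rule measurable_measure_of)
      fix U :: "'n torus set" assume "U \<in> {U. torus_open U}"
      then have U: "open (tor_proj -` U)" unfolding torus_open_def by simp
      have "tor_proj -` (inv f -` U) = G -` (tor_proj -` U)" using G(2) by auto
      then have "torus_open (inv f -` U)"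
        unfolding torus_open_def using U Gc continuous_on_open_vimage[of UNIV G] by auto
      then show "inv f -` U \<inter> space \<mu> \<in> sets \<mu>" using opn_sets sp by simp
    qed auto
    then show ?thesis using measurable_cong_sets[OF refl borel[symmetric]] by blast
  qed
  have ginvpres: "measure \<mu> (inv f -` B) = measure \<mu> B" if "B \<in> sets \<mu>" for B
  proof -
    have m: "inv f -` B \<in> sets \<mu>" using measurable_sets[OF ginvmeas that] sp by simp
    have "f -` (inv f -` B) = B" using bij by (auto simp: bij_def)
    then show ?thesis using fpres[OF m] by simp
  qed
  have itmeas: "int_iter f l \<in> measurable \<mu> \<mu> \<and> (\<forall>B\<in>sets \<mu>. measure \<mu> (int_iter f l -` B) = measure \<mu> B)" for l
    unfolding int_iter_def
    using iter_pres[OF fmeas sp fpres] iter_pres[OF ginvmeas sp ginvpres] by auto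
  have vm: "int_iter f l -` S \<in> sets \<mu>" if "S \<in> sets \<mu>" for l S
    using measurable_sets[OF conjunct1[OF itmeas] that] sp by simp
  define a where "a m = 1 - measure \<mu> (A m)" for m
  have apos: "a m > 0" for m using small[of m] unfolding a_def by simp
  define J where "J m = \<lceil>\<epsilon> / a m\<rceil>" for m
  have J0: "J m \<ge> 0" for m
  proof -
    have "0 < \<epsilon> / a m" using apos[of m] eps by simp
    then show ?thesis unfolding J_def by linarith
  qed
  define B where "B m = (\<Inter>l\<in>{-J m..J m}. int_iter f l -` A m)" for m
  have Bm: "B m \<in> sets \<mu>" for m
    unfolding B_def using vm Am J0[of m] by (intro sets.finite_INT) auto
  have Bmeas: "measure \<mu> (B m) \<ge> 1 - 2*\<epsilon> - 3 * a m" for m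
  proof -
    have cm: "UNIV - A m \<in> sets \<mu>" using sets.compl_sets[OF Am] sp by simp
    have cB: "UNIV - B m = (\<Union>l\<in>{-J m..J m}. int_iter f l -` (UNIV - A m))"
      unfolding B_def by auto
    have "measure \<mu> (UNIV - B m) \<le> (\<Sum>l\<in>{-J m..J m}. measure \<mu> (int_iter f l -` (UNIV - A m)))"
      unfolding cB using vm cm by (intro P.finite_measure_subadditive_finite) auto
    also have "\<dots> = (\<Sum>l\<in>{-J m..J m}. a m)"
      using itmeas cm P.prob_compl[OF Am] sp unfolding a_def by simp
    also have "\<dots> = real_of_int (2 * J m + 1) * a m"
      using J0[of m] by simp
    also have "\<dots> \<le> (2 * (\<epsilon> / a m + 1) + 1) * a m"
    proof (intro mult_right_mono)
      have "real_of_int (J m) \<le> \<epsilon> / a m + 1" unfolding J_def by linarith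
      then show "real_of_int (2 * J m + 1) \<le> 2 * (\<epsilon> / a m + 1) + 1" by simp
    qed (use apos[of m] in auto)
    also have "\<dots> = 2*\<epsilon> + 3 * a m" using apos[of m] by (simp add: field_simps)
    finally have "measure \<mu> (UNIV - B m) \<le> 2*\<epsilon> + 3 * a m" .
    then show ?thesis using P.prob_compl[OF Bm] sp by simp
  qed
  have Peq: "P_set f \<mu> A \<epsilon> = (\<Inter>n. \<Union>m\<in>{n..}. B m)"
  proof (intro equalityI subsetI)
    fix x assume "x \<in> P_set f \<mu> A \<epsilon>"
    then obtain ms :: "nat \<Rightarrow> nat" and js :: "nat \<Rightarrow> int" where sm: "strict_mono ms" and H0: "\<forall>i. real_of_int (js i) \<ge> \<epsilon> / (1 - measure \<mu> (A (ms i))) \<and>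
           (\<forall>l::int. - js i \<le> l \<and> l \<le> js i \<longrightarrow> int_iter f l x \<in> A (ms i))"
      unfolding P_set_def by blast
    note H = spec[OF H0]
    show "x \<in> (\<Inter>n. \<Union>m\<in>{n..}. B m)"
    proof
      fix n
      have "J (ms n) \<le> js n" using H[of n] unfolding J_def a_def by (simp add: ceiling_le)
      then have "x \<in> B (ms n)" using H[of n] unfolding B_def by auto
      moreover have "n \<le> ms n" using sm by (rule seq_suble)
      ultimately show "x \<in> (\<Union>m\<in>{n..}. B m)" by auto
    qed
  next
    fix x assume x: "x \<in> (\<Inter>n. \<Union>m\<in>{n..}. B m)"
    define S where "S = {m. x \<in> B m}"
    have "infinite S" unfolding S_def infinite_nat_iff_unbounded_le using x by auto
    then have sm: "strict_mono (enumerate S)" and ins: "\<And>i. enumerate S i \<in> S"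
      by (auto simp: strict_mono_enumerate enumerate_in_set)
    show "x \<in> P_set f \<mu> A \<epsilon>"
      unfolding P_set_def
    proof (intro CollectI exI[of _ "enumerate S"] exI[of _ "\<lambda>i. J (enumerate S i)"] conjI allI sm)
      fix i
      show "\<epsilon> / (1 - measure \<mu> (A (enumerate S i))) \<le> real_of_int (J (enumerate S i))"
        unfolding J_def a_def by (rule le_of_int_ceiling)
      fix l show "- J (enumerate S i) \<le> l \<and> l \<le> J (enumerate S i) \<longrightarrow> int_iter f l x \<in> A (enumerate S i)"
        using ins[of i] unfolding S_def B_def by auto
    qed
  qed
  define D where "D n = (\<Union>m\<in>{n..}. B m)" for n
  have Dm: "D n \<in> sets \<mu>" for n unfolding D_def using Bm by auto
  have Pm: "P_set f \<mu> A \<epsilon> \<in> sets \<mu>" unfolding Peq using Bm by auto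
  have alim: "(\<lambda>k. measure \<mu> (A k)) \<longlonglongrightarrow> 1"
    using P.finite_Lim_measure_incseq[of A] Am incr full by (auto simp: incseq_Suc_iff)
  have Xlim: "(\<lambda>k. 1 - 2*\<epsilon> - 3 * a k) \<longlonglongrightarrow> 1 - 2*\<epsilon>"
  proof -
    have "(\<lambda>k. 1 - 2*\<epsilon> - 3 * (1 - measure \<mu> (A k))) \<longlonglongrightarrow> 1 - 2*\<epsilon> - 3 * (1 - 1)"
      by (intro tendsto_intros alim)
    then show ?thesis unfolding a_def by simp
  qed
  have Dge: "1 - 2*\<epsilon> \<le> measure \<mu> (D n)" for n
  proof (rule LIMSEQ_le_const2[OF Xlim])
    show "\<exists>N. \<forall>k\<ge>N. 1 - 2 * \<epsilon> - 3 * a k \<le> measure \<mu> (D n)"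
    proof (intro exI allI impI)
      fix k assume "n \<le> k"
      then have "B k \<subseteq> D n" unfolding D_def by auto
      then have "measure \<mu> (B k) \<le> measure \<mu> (D n)" using Dm by (intro P.finite_measure_mono) auto
      then show "1 - 2 * \<epsilon> - 3 * a k \<le> measure \<mu> (D n)" using Bmeas[of k] by linarith
    qed
  qed
  have Dlim: "(\<lambda>n. measure \<mu> (D n)) \<longlonglongrightarrow> measure \<mu> (\<Inter>n. D n)"
    using Dm by (intro P.finite_Lim_measure_decseq) (auto simp: decseq_def D_def, meson atLeast_iff order_trans)
  have "1 - 2*\<epsilon> \<le> measure \<mu> (\<Inter>n. D n)"
    using Dlim Dge by (intro LIMSEQ_le_const[OF Dlim]) auto
  then have "1 - 2*\<epsilon> \<le> measure \<mu> (P_set f \<mu> A \<epsilon>)" unfolding Peq D_def .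
  then show ?thesis using Pm eps by auto
qed

end
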